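(* Let $q\ge1$ and $t\ge 1$ be integers. If a code $\mathcal{C}\subseteq\mathcal{S}_{\mathrm{all}}^q$ is a $t$-tail-deletion-correcting code, then it is a $t$-tail-insertion-correcting code. However, the converse does not hold in general: there exist integers $q$ and $t\ge1$ and a code $\mathcal{C}\subseteq\mathcal{S}_{\mathrm{all}}^q$ that is $t$-tail-insertion-correcting but not $t$-tail-deletion-correcting.
   Context: Let $[q]=\{0,1,\dots,q-1\}$. For $1\le m\le q$, a partial permutation of length $m$ over $[q]$ is a sequence $\pi=(\pi_1,\dots,\pi_m)$ of $m$ pairwise distinct elements of $[q]$. Let $\mathcal{S}_m^q$ be the set of those of length $m$ and $\mathcal{S}_{\mathrm{all}}^q=\bigcup_{m=1}^{q}\mathcal{S}_m^q$. A code is any subset of $\mathcal{S}_{\mathrm{all}}^q$. Juxtaposition $\omega\pi$ denotes concatenation with $\omega$ on the left. Tail deletions: for $\pi$ of length $m$ and integer $j\ge 0$, $\pi_{\downarrow j}=(\pi_{k+1},\dots,\pi_m)$ with $k=\min(j,m-1)$ (leftmost symbols are deleted; the last symbol is never deleted); $\mathcal{B}_{\mathrm{del}}^t(\pi)=\{\pi_{\downarrow j}:0\le j\le t\}$. Tail insertions: $\mathcal{B}_{\mathrm{ins}}^t(\pi)$ is the set of all $\omega\pi\in\mathcal{S}_{\mathrm{all}}^q$ with $\omega$ a (possibly empty) sequence of at most $t$ elements of $[q]$. For $X\in\{\mathrm{del},\mathrm{ins}\}$, a code $\mathcal{C}$ is $t$-tail-$X$-correcting if $\mathcal{B}_X^t(\pi_1)\cap\mathcal{B}_X^t(\pi_2)=\emptyset$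 for all distinct $\pi_1,\pi_2\in\mathcal{C}$. *)

theory Defs
  imports Main
begin

text \<open>Partial permutations over [q] = {0..<q}, represented as lists of naturals.\<close>

definition S_m :: "nat \<Rightarrow> nat \<Rightarrow> nat list set" where
  "S_m q m = {p. length p = m \<and> distinct p \<and> set p \<subseteq> {0..<q}}"

definition S_all :: "nat \<Rightarrow> nat list set" where
  "S_all q = (\<Union>m\<in>{1..q}. S_m q m)"

definition tail_del :: "nat list \<Rightarrow> nat \<Rightarrow> nat list" where
  "tail_del p j = drop (min j (length p - 1)) p"

definition ball_del :: "nat \<Rightarrow> nat list \<Rightarrow> nat list set" where
  "ball_del t p = {tail_del p j | j. j \<le> t}"

definition ball_ins :: "nat \<Rightarrow> nat \<Rightarrow> nat list \<Rightarrow> nat list set" where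
  "ball_ins q t p = {w @ p | w. length w \<le> t \<and> set w \<subseteq> {0..<q} \<and> w @ p \<in> S_all q}"

definition tail_del_correcting :: "nat \<Rightarrow> nat \<Rightarrow> nat list set \<Rightarrow> bool" where
  "tail_del_correcting q t C \<longleftrightarrow>
     (\<forall>p1\<in>C. \<forall>p2\<in>C. p1 \<noteq> p2 \<longrightarrow> ball_del t p1 \<inter> ball_del t p2 = {})"

definition tail_ins_correcting :: "nat \<Rightarrow> nat \<Rightarrow> nat list set \<Rightarrow> bool" where
  "tail_ins_correcting q t C \<longleftrightarrow>
     (\<forall>p1\<in>C. \<forall>p2\<in>C. p1 \<noteq> p2 \<longrightarrow> ball_ins q t p1 \<inter> ball_ins q t p2 = {})"

end

theory Submission
  imports Defs
begin

lemma S_all_ne: "p \<in> S_all q \<Longrightarrow> p \<noteq> []"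
  by (auto simp: S_all_def S_m_def)

lemma part1_aux:
  assumes ne: "p2 \<noteq> []" and eq: "w1 @ p1 = w2 @ (p2::nat list)"
    and le: "length w1 \<le> length w2" and lt: "length w2 \<le> t"
  shows "p2 \<in> ball_del t p1 \<inter> ball_del t p2"
proof -
  define u where "u = drop (length w1) w2"
  have p1: "p1 = u @ p2" using eq le unfolding u_def
    by (metis append_eq_append_conv_if)
  have "tail_del p1 (length u) = p2"
    using ne by (cases p2) (simp_all add: tail_del_def p1 min_def)
  moreover have "length u \<le> t" using lt by (simp add: u_def)
  moreover have "tail_del p2 0 = p2" by (simp add: tail_del_def)
  ultimately show ?thesis unfolding ball_del_def by force
qed

lemma part1:
  assumes "C \<subseteq> S_all q" "tail_del_correcting q t C"
  shows "tail_ins_correcting q t C"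
  unfolding tail_ins_correcting_def
proof (intro ballI impI)
  fix p1 p2 assume h: "p1 \<in> C" "p2 \<in> C" "p1 \<noteq> p2"
  show "ball_ins q t p1 \<inter> ball_ins q t p2 = {}"
  proof (rule ccontr)
    assume "ball_ins q t p1 \<inter> ball_ins q t p2 \<noteq> {}"
    then obtain w1 w2 where eq: "w1 @ p1 = w2 @ p2" and l1: "length w1 \<le> t" and l2: "length w2 \<le> t"
      unfolding ball_ins_def by blast
    have n1: "p1 \<noteq> []" and n2: "p2 \<noteq> []" using h assms(1) S_all_ne by auto
    have d: "ball_del t p1 \<inter> ball_del t p2 = {}"
      using assms(2) h unfolding tail_del_correcting_def by blast
    show False
    proof (cases "length w1 \<le> length w2")
      case True
      then show ?thesis using part1_aux[OF n2 eq True l2] d by blast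
    next
      case False
      then show ?thesis using part1_aux[OF n1 eq[symmetric] _ l1] d by auto
    qed
  qed
qed

lemma part2:
  "tail_ins_correcting 3 1 {[0,1],[2,1]} \<and> \<not> tail_del_correcting 3 1 {[0,1],[2,1]}
   \<and> {[0,1],[2,1]} \<subseteq> S_all 3"
proof (intro conjI)
  show "tail_ins_correcting 3 1 {[0,1],[2,1]}"
    unfolding tail_ins_correcting_def ball_ins_def
    by auto
  have "[1] \<in> ball_del 1 [0,1] \<inter> ball_del 1 [2,1]"
    unfolding ball_del_def tail_del_def
    by (auto intro!: exI[of _ 1])
  then show "\<not> tail_del_correcting 3 1 {[0,1],[2,1]}"
    unfolding tail_del_correcting_def by auto
  show "{[0,1],[2,1]} \<subseteq> S_all 3"
    unfolding S_all_def S_m_def by (auto intro!: bexI[of _ 2])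
qed

theorem mainTheorem4:
  shows "(\<forall>(q::nat) (t::nat) C. q \<ge> 1 \<longrightarrow> t \<ge> 1 \<longrightarrow> C \<subseteq> S_all q \<longrightarrow>
            tail_del_correcting q t C \<longrightarrow> tail_ins_correcting q t C)
       \<and> (\<exists>(q::nat) (t::nat) C. q \<ge> 1 \<and> t \<ge> 1 \<and> C \<subseteq> S_all q \<and>
            tail_ins_correcting q t C \<and> \<not> tail_del_correcting q t C)"
  using part1 part2 by (metis one_le_numeral order_refl)

end
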